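(* Let $x\in(0,1)$ and let $n$ be an integer with $n\ge n_0(x)$. Then for every integer $m\ge 2n+1$, \[ \big|m-A_m^{n}\big|<\frac{2x^{2n+1-m}}{(1-x)^{2n+2}}\cdot\frac{(n!)^2}{((2n)!)^2}. \]
   Context: For $n\ge1$ let $y_n(z)=\sum_{k=0}^{n}\frac{(n+k)!}{(n-k)!\,k!}\left(\frac{z}{2}\right)^k$ be the $n$-th Bessel polynomial and let $\alpha_{n1},\dots,\alpha_{nn}$ be its zeros (they are simple). Put $a_{nk}=1-\alpha_{nk}/2$ and $b_{nk}=1+\alpha_{nk}/2$ for $k=1,\dots,n$. For $m\ge1$ define $A_m^{n}=\sum_{k=1}^n\big(a_{nk}^m-b_{nk}^m\big)$. For $x\in(0,1)$ put $n_0(x)=\max\{14,\;x^2(1-x)^{-2}\}-1$. *)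

theory Defs
  imports "HOL-Analysis.Analysis" "HOL-Computational_Algebra.Polynomial"
begin

definition bessel_poly :: "nat \<Rightarrow> complex poly" where
  "bessel_poly n = (\<Sum>k\<le>n. monom (of_real (fact (n+k) / (fact (n-k) * fact k) / 2 ^ k)) k)"

text \<open>The set of zeros of y_n (they are simple, so summing over the set equals summing over zeros with multiplicity).\<close>
definition bessel_zeros :: "nat \<Rightarrow> complex set" where
  "bessel_zeros n = {z. poly (bessel_poly n) z = 0}"

definition A_bessel :: "nat \<Rightarrow> nat \<Rightarrow> complex" where
  "A_bessel m n = (\<Sum>\<alpha>\<in>bessel_zeros n. (1 - \<alpha>/2) ^ m - (1 + \<alpha>/2) ^ m)"

definition n0 :: "real \<Rightarrow> real" where
  "n0 x = max 14 (x^2 / (1-x)^2) - 1"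

end

theory Submission
  imports Defs "HOL-Complex_Analysis.Complex_Analysis" "HOL-Computational_Algebra.Fundamental_Theorem_Algebra"
begin

definition cB :: "nat \<Rightarrow> nat \<Rightarrow> real" where
  "cB n k = fact (n+k) / (fact (n-k) * fact k) / 2 ^ k"

lemma coeff_bessel: "coeff (bessel_poly n) k = (if k \<le> n then of_real (cB n k) else 0)"
  unfolding bessel_poly_def cB_def by (simp add: coeff_sum)

lemma cB_pos: "k \<le> n \<Longrightarrow> cB n k > 0"
  unfolding cB_def by simp

lemma degree_bessel: "degree (bessel_poly n) = n"
proof (rule antisym)
  show "degree (bessel_poly n) \<le> n" by (rule degree_le) (auto simp: coeff_bessel)
  show "n \<le> degree (bessel_poly n)" 
    by (rule le_degree) (use cB_pos[of n n] in \<open>auto simp: coeff_bessel\<close>)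
qed

lemma lc_bessel: "lead_coeff (bessel_poly n) = of_real (fact (2*n) / (fact n * 2^n))"
  by (simp add: degree_bessel coeff_bessel cB_def mult_2)

lemma bessel_nz: "bessel_poly n \<noteq> 0"
  using lc_bessel[of n] by auto

lemma poly_bessel_0: "poly (bessel_poly n) 0 = 1"
  by (simp add: poly_0_coeff_0 coeff_bessel cB_def)

lemma cB_rec: "k < n \<Longrightarrow> 2 * real (k+1) * cB n (k+1) = real (n+k+1) * real (n-k) * cB n k"
proof -
  assume k: "k < n"
  have e1: "fact (n+(k+1)) = real (n+k+1) * fact (n+k)" by (simp add: algebra_simps)
  have e2: "fact (n-k) = real (n-k) * (fact (n-(k+1)) :: real)"
    using k by (metis Suc_diff_Suc Suc_eq_plus1 fact_Suc of_nat_fact of_nat_mult)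
  have e3: "fact (k+1) = real (k+1) * (fact k :: real)" by simp
  have p: "real (n-k) > 0" using k by simp
  define A where "A = (fact (n+k) :: real)"
  define B where "B = (fact (n-(k+1)) :: real)"
  define C where "C = (fact k :: real)"
  have "A > 0" "B > 0" "C > 0" unfolding A_def B_def C_def by auto
  have c1: "cB n (k+1) = real (n+k+1) * A / (B * (real (k+1) * C)) / (2 * 2^k)"
    unfolding cB_def e1 e3 A_def B_def C_def by simp
  have c2: "cB n k = A / (real (n-k) * B * C) / 2^k"
    unfolding cB_def e2 A_def B_def C_def by simp
  define D where "D = real (n-k)"
  define K where "K = real (k+1)"
  have "K > 0" unfolding K_def by simp
  have c1': "cB n (k+1) = real (n+k+1) * A / (B * (K * C)) / (2 * 2^k)"
    unfolding c1 K_def ..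
  have c2': "cB n k = A / (D * B * C) / 2^k" unfolding c2 D_def ..
  have pD: "D > 0" using p unfolding D_def .
  show ?thesis unfolding c1' c2' K_def[symmetric] D_def[symmetric]
    using pD \<open>K > 0\<close> \<open>A > 0\<close> \<open>B > 0\<close> \<open>C > 0\<close>
    by (simp add: field_simps)
qed

lemma bessel_ode:
  "monom 1 2 * pderiv (pderiv (bessel_poly n)) + [:2,2:] * pderiv (bessel_poly n)
     = smult (of_nat (n*(n+1))) (bessel_poly n)"
proof (rule poly_eqI)
  fix k
  define c where "c = (\<lambda>j. coeff (bessel_poly n) j)"
  have L: "coeff (monom 1 2 * pderiv (pderiv (bessel_poly n))) k = of_nat k * (of_nat k - 1) * c k"
    apply (simp only: coeff_monom_mult)
    by (cases k; cases "k - 1") (auto simp: coeff_pderiv c_def algebra_simps)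
  have M: "coeff ([:2,2:] * pderiv (bessel_poly n)) k = 2 * of_nat (Suc k) * c (Suc k) + 2 * of_nat k * c k"
    by (cases k) (auto simp: coeff_pderiv c_def algebra_simps)
  have key: "of_nat k * (of_nat k - 1) * c k + (2 * of_nat (Suc k) * c (Suc k) + 2 * of_nat k * c k)
        = of_nat (n*(n+1)) * c k"
  proof (cases "k < n")
    case True
    have r: "2 * real (k+1) * cB n (k+1) = real (n+k+1) * real (n-k) * cB n k" by (rule cB_rec[OF True])
    have r': "2 * of_nat (Suc k) * c (Suc k) = of_real (real (n+k+1) * real (n-k)) * c k"
      using True arg_cong[OF r, of complex_of_real] by (simp add: c_def coeff_bessel)
    have nk: "real (n-k) = real n - real k" using True by simp
    show ?thesis unfolding r' using nk
      by (simp add: of_real_mult algebra_simps)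
  next
    case False
    hence "c (Suc k) = 0" by (simp add: c_def coeff_bessel)
    moreover have "k = n \<or> c k = 0" using False by (auto simp: c_def coeff_bessel)
    ultimately show ?thesis by (auto simp: algebra_simps)
  qed
  show "coeff (monom 1 2 * pderiv (pderiv (bessel_poly n)) + [:2,2:] * pderiv (bessel_poly n)) k =
        coeff (smult (of_nat (n*(n+1))) (bessel_poly n)) k"
    using key by (simp only: coeff_add L M coeff_smult c_def)
qed

lemma bessel_order1:
  assumes "poly (bessel_poly n) a = 0" shows "order a (bessel_poly n) = 1"
proof (rule ccontr)
  assume ne: "order a (bessel_poly n) \<noteq> 1"
  define Y where "Y = bessel_poly n"
  define Y1 where "Y1 = pderiv Y"
  define Y2 where "Y2 = pderiv Y1"
  define r where "r = order a Y"
  have Ynz: "Y \<noteq> 0" unfolding Y_def by (rule bessel_nz)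
  have a0: "a \<noteq> 0" using assms poly_bessel_0[of n] by auto
  have "r \<noteq> 0" using assms Ynz order_root unfolding r_def Y_def by blast
  hence r2: "r \<ge> 2" using ne unfolding r_def Y_def by linarith
  have n0: "n \<noteq> 0"
  proof
    assume "n = 0"
    hence "degree Y = 0" unfolding Y_def by (simp add: degree_bessel)
    hence "Y = [:poly Y 0:]" by (metis degree_0_id poly_0_coeff_0)
    hence "poly Y a = 1" unfolding Y_def by (metis poly_bessel_0 poly_const_conv)
    thus False using assms unfolding Y_def by simp
  qed
  have Y1nz: "Y1 \<noteq> 0" unfolding Y1_def using n0 by (simp add: pderiv_eq_0_iff Y_def degree_bessel)
  have o1: "r = Suc (order a Y1)" unfolding r_def Y1_def
    using order_pderiv[OF Ynz] assms Y_def by blast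
  have pY1: "poly Y1 a = 0" using o1 r2 Y1nz order_root by (metis Suc_le_mono numerals(2) not_less_eq_eq zero_less_Suc le_zero_eq)
  have Y2nz: "Y2 \<noteq> 0"
  proof
    assume "Y2 = 0"
    hence "degree Y1 = 0" unfolding Y2_def by (simp add: pderiv_eq_0_iff)
    hence "Y1 = [:poly Y1 0:]" by (metis degree_0_id poly_0_coeff_0)
    hence "Y1 = 0" using pY1 by (metis poly_const_conv pCons_0_0)
    thus False using Y1nz by simp
  qed
  have o2: "order a Y1 = Suc (order a Y2)" unfolding Y2_def
    using order_pderiv[OF Y1nz pY1] .
  define q where "q = [:-a, 1:] ^ (r - 1)"
  have d1: "q dvd Y" unfolding q_def using order_divides r_def by (metis diff_le_self)
  have d2: "q dvd Y1" unfolding q_def using order_divides o1 by (metis diff_Suc_1 order_refl)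
  have ode: "monom 1 2 * Y2 = smult (of_nat (n*(n+1))) Y - [:2,2:] * Y1"
    using bessel_ode[of n] unfolding Y_def Y1_def Y2_def by (simp add: algebra_simps)
  have d3: "q dvd monom 1 2 * Y2" unfolding ode
    by (intro dvd_diff dvd_smult dvd_mult d1 d2)
  have m0: "order a (monom 1 2) = 0" using a0 by (intro order_0I) (simp add: poly_monom)
  have "monom 1 2 * Y2 \<noteq> 0" using Y2nz by simp
  hence "order a (monom 1 2 * Y2) = order a Y2" using order_mult[of "monom 1 2" Y2 a] m0 by simp
  hence "r - 1 \<le> order a Y2" using d3 unfolding q_def using order_divides \<open>monom 1 2 * Y2 \<noteq> 0\<close> by metis
  thus False using o1 o2 r2 by simp
qed

lemma bessel_rsquarefree: "rsquarefree (bessel_poly n)"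
  unfolding rsquarefree_def using bessel_nz bessel_order1 order_0I by blast

lemma logderiv_prod:
  fixes S :: "complex set"
  assumes "finite S" "u \<notin> S"
  shows "poly (pderiv (\<Prod>z\<in>S. [:-z,1:])) u / poly (\<Prod>z\<in>S. [:-z,1:]) u = (\<Sum>z\<in>S. 1/(u-z))"
  using assms
proof (induction S rule: finite_induct)
  case empty
  then show ?case by simp
next
  case (insert z S)
  define G where "G = (\<Prod>z\<in>S. [:-z,1:])"
  have Gnz: "poly G u \<noteq> 0" unfolding G_def using insert.prems insert.hyps(1) by (auto simp: poly_prod prod_zero_iff)
  have uz: "u - z \<noteq> 0" using insert.prems by simp
  have pd: "pderiv ([:-z,1:] * G) = [:-z,1:] * pderiv G + G"
    by (simp only: pderiv_mult) (simp add: pderiv_pCons)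
  have "poly (pderiv ([:-z,1:] * G)) u / poly ([:-z,1:] * G) u
       = poly (pderiv G) u / poly G u + 1/(u-z)"
    unfolding pd using Gnz uz by (simp add: field_simps)
  then show ?case using insert unfolding G_def by (simp add: prod.insert sum.insert add.commute)
qed

lemma bessel_zeros_finite: "finite (bessel_zeros n)"
  unfolding bessel_zeros_def using poly_roots_finite[OF bessel_nz] .

lemma bessel_logderiv:
  assumes "poly (bessel_poly n) u \<noteq> 0"
  shows "(\<Sum>a\<in>bessel_zeros n. 1/(u-a)) = poly (pderiv (bessel_poly n)) u / poly (bessel_poly n) u"
proof -
  define G where "G = (\<Prod>z\<in>bessel_zeros n. [:-z,1:])"
  have dec: "smult (lead_coeff (bessel_poly n)) G = bessel_poly n"
    unfolding G_def bessel_zeros_def by (rule complex_poly_decompose_rsquarefree[OF bessel_rsquarefree])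
  have lc: "lead_coeff (bessel_poly n) \<noteq> 0" using bessel_nz by simp
  have u: "u \<notin> bessel_zeros n" using assms by (simp add: bessel_zeros_def)
  have "poly (pderiv (bessel_poly n)) u / poly (bessel_poly n) u = poly (pderiv G) u / poly G u"
    using lc by (subst (1 2) dec[symmetric]) (simp add: pderiv_smult)
  also have "\<dots> = (\<Sum>a\<in>bessel_zeros n. 1/(u-a))"
    unfolding G_def by (rule logderiv_prod[OF bessel_zeros_finite u])
  finally show ?thesis by simp
qed


lemma bessel_ode_val:
  fixes v :: complex
  shows "v^2 * poly (pderiv (pderiv (bessel_poly n))) v + (2 + 2* v) * poly (pderiv (bessel_poly n)) v
     = of_nat (n*(n+1)) * poly (bessel_poly n) v"
  using arg_cong[OF bessel_ode[of n], of "\<lambda>p. poly p v"] by (simp add: poly_monom algebra_simps)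

lemma bessel_ode_val':
  fixes v :: complex
  shows "2 * v * poly (pderiv (pderiv (bessel_poly n))) v + v^2 * poly (pderiv (pderiv (pderiv (bessel_poly n)))) v
      + 2 * poly (pderiv (bessel_poly n)) v + (2 + 2* v) * poly (pderiv (pderiv (bessel_poly n))) v
     = of_nat (n*(n+1)) * poly (pderiv (bessel_poly n)) v"
proof -
  have "pderiv (monom 1 2 * pderiv (pderiv (bessel_poly n)) + [:2,2:] * pderiv (bessel_poly n))
     = pderiv (smult (of_nat (n*(n+1))) (bessel_poly n))" by (simp only: bessel_ode)
  hence "pderiv (monom 1 2) * pderiv (pderiv (bessel_poly n)) + monom 1 2 * pderiv (pderiv (pderiv (bessel_poly n)))
     + (pderiv [:2,2:] * pderiv (bessel_poly n) + [:2,2:] * pderiv (pderiv (bessel_poly n)))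
     = smult (of_nat (n*(n+1))) (pderiv (bessel_poly n))"
    by (simp only: pderiv_add pderiv_mult pderiv_smult) (simp add: ac_simps)
  from arg_cong[OF this, of "\<lambda>p. poly p v"] show ?thesis
    by (simp add: poly_monom pderiv_monom pderiv_pCons algebra_simps)
qed

lemma bessel_wronski:
  fixes u :: complex
  shows "u^2 * (poly (pderiv (bessel_poly n)) (-u) * poly (bessel_poly n) u
             + poly (pderiv (bessel_poly n)) u * poly (bessel_poly n) (-u))
        + 2 * poly (bessel_poly n) u * poly (bessel_poly n) (-u) = 2"
proof -
  define Y where "Y = bessel_poly n"
  define M where "M = [:0, -1:: complex:]"
  define Phi where "Phi = monom 1 2 * (pcompose (pderiv Y) M * Y + pderiv Y * pcompose Y M)
      + smult 2 (Y * pcompose Y M)"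
  have pv: "poly Phi v = v^2 * (poly (pderiv Y) (-v) * poly Y v + poly (pderiv Y) v * poly Y (-v))
        + 2 * poly Y v * poly Y (-v)" for v
    unfolding Phi_def M_def by (simp add: poly_monom poly_pcompose)
  have dPhi: "pderiv Phi = 0"
  proof -
    have "poly (pderiv Phi) v = 0" for v
    proof -
      have e1: "v^2 * poly (pderiv (pderiv Y)) v + (2 + 2* v) * poly (pderiv Y) v
          = of_nat (n*(n+1)) * poly Y v" unfolding Y_def by (rule bessel_ode_val)
      have e2: "(-v)^2 * poly (pderiv (pderiv Y)) (-v) + (2 + 2*(-v)) * poly (pderiv Y) (-v)
          = of_nat (n*(n+1)) * poly Y (-v)" unfolding Y_def by (rule bessel_ode_val)
      have "poly (pderiv Phi) v = 2* v * (poly (pderiv Y) (-v) * poly Y v + poly (pderiv Y) v * poly Y (-v))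
          + v^2 * (- poly (pderiv (pderiv Y)) (-v) * poly Y v + poly (pderiv Y) (-v) * poly (pderiv Y) v
                   + poly (pderiv (pderiv Y)) v * poly Y (-v) - poly (pderiv Y) v * poly (pderiv Y) (-v))
          + 2 * (poly (pderiv Y) v * poly Y (-v) - poly Y v * poly (pderiv Y) (-v))"
        unfolding Phi_def M_def
        by (simp add: pderiv_mult pderiv_pcompose pderiv_add pderiv_smult poly_pcompose poly_monom
              pderiv_monom pderiv_pCons algebra_simps)
      also have "\<dots> = 0" using e1 e2 by algebra
      finally show ?thesis .
    qed
    thus ?thesis using poly_eq_poly_eq_iff[of "pderiv Phi" 0] by auto
  qed
  then obtain c where "Phi = [:c:]" using pderiv_iszero by blast
  hence "poly Phi u = poly Phi 0" by simp
  also have "\<dots> = 2" using pv[of 0] poly_bessel_0[of n] unfolding Y_def by simp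
  finally show ?thesis using pv[of u] unfolding Y_def by simp
qed


definition PB :: "nat \<Rightarrow> complex poly" where
  "PB n = bessel_poly n * pcompose (bessel_poly n) [:0,-1:]"

definition EB :: "nat \<Rightarrow> complex poly" where
  "EB n = (let P = PB n; K = of_nat (4*(n*(n+1))+1) in
     smult 4 (pderiv P) + smult (K-1) (monom 1 1 * P) + smult (K-7) (monom 1 2 * pderiv P)
     - smult 6 (monom 1 3 * pderiv (pderiv P)) - monom 1 4 * pderiv (pderiv (pderiv P)))"

lemma EB_zero: "EB n = 0"
proof -
  define Y where "Y = bessel_poly n"
  have "poly (EB n) v = 0" for v
  proof -
    have e1: "v^2 * poly (pderiv (pderiv Y)) v + (2 + 2 * v) * poly (pderiv Y) v
          = of_nat (n*(n+1)) * poly Y v" unfolding Y_def by (rule bessel_ode_val)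
    have e2: "(-v)^2 * poly (pderiv (pderiv Y)) (-v) + (2 + 2*(-v)) * poly (pderiv Y) (-v)
          = of_nat (n*(n+1)) * poly Y (-v)" unfolding Y_def by (rule bessel_ode_val)
    have e3: "2 * v * poly (pderiv (pderiv Y)) v + v^2 * poly (pderiv (pderiv (pderiv Y))) v
      + 2 * poly (pderiv Y) v + (2 + 2 * v) * poly (pderiv (pderiv Y)) v
     = of_nat (n*(n+1)) * poly (pderiv Y) v" unfolding Y_def by (rule bessel_ode_val')
    have e4: "2 * (-v) * poly (pderiv (pderiv Y)) (-v) + (-v)^2 * poly (pderiv (pderiv (pderiv Y))) (-v)
      + 2 * poly (pderiv Y) (-v) + (2 + 2 * (-v)) * poly (pderiv (pderiv Y)) (-v)
     = of_nat (n*(n+1)) * poly (pderiv Y) (-v)" unfolding Y_def by (rule bessel_ode_val')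
    define N where "N = (of_nat (n*(n+1)) :: complex)"
    have K: "(of_nat (4*(n*(n+1))+1) :: complex) = 4 * N + 1" unfolding N_def by simp
    show ?thesis
      unfolding EB_def PB_def Let_def K Y_def[symmetric]
      using e1 e2 e3 e4 unfolding N_def[symmetric]
      apply (simp add: pderiv_mult pderiv_pcompose pderiv_add pderiv_smult pderiv_diff poly_pcompose poly_monom
              pderiv_monom pderiv_pCons)
      by algebra
  qed
  thus ?thesis using poly_eq_poly_eq_iff[of "EB n" 0] by auto
qed

lemma PB_rec:
  "of_nat (4*(m+2)) * coeff (PB n) (m+2)
     = - (of_nat (m+1) * (of_nat ((2*n+1)^2) - of_nat ((m+1)^2))) * coeff (PB n) m"
proof -
  define P where "P = PB n"
  define K where "K = (of_nat (4*(n*(n+1))+1) :: complex)"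
  have c: "coeff (EB n) (Suc m) = 4 * of_nat (m+2) * coeff P (m+2) + (K-1) * coeff P m + (K-7) * of_nat m * coeff P m
        - 6 * (of_nat m * (of_nat m - 1)) * coeff P m
        - of_nat m * (of_nat m - 1) * (of_nat m - 2) * coeff P m"
  proof -
    consider "m = 0" | "m = 1" | "m = 2" | j where "m = Suc (Suc (Suc j))"
      by (metis One_nat_def Suc_1 not0_implies_Suc)
    thus ?thesis unfolding EB_def Let_def P_def[symmetric] K_def[symmetric]
      by cases (simp_all only: coeff_add coeff_diff coeff_smult coeff_monom_mult,
                auto simp: coeff_pderiv algebra_simps numeral_eq_Suc)
  qed
  have e: "4 * of_nat (m+2) * coeff P (m+2) + (K-1) * coeff P m + (K-7) * of_nat m * coeff P m
        - 6 * (of_nat m * (of_nat m - 1)) * coeff P m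
        - of_nat m * (of_nat m - 1) * (of_nat m - 2) * coeff P m = 0"
    using c by (simp add: EB_zero)
  have K': "K = of_nat ((2*n+1)^2)" unfolding K_def by (simp add: power2_eq_square algebra_simps)
  show ?thesis using e unfolding P_def[symmetric] K'[symmetric]
    by (simp add: algebra_simps power2_eq_square)
qed

lemma PB_coeff1: "coeff (PB n) 1 = 0"
proof -
  have "coeff (EB n) 0 = 0" by (simp add: EB_zero)
  thus ?thesis unfolding EB_def Let_def
    by (simp add: coeff_monom_mult coeff_pderiv)
qed


definition lcr :: "nat \<Rightarrow> real" where "lcr n = fact (2*n) / (fact n * 2^n)"

lemma lcr_pos: "lcr n > 0" unfolding lcr_def by simp

lemma PB_nz: "PB n \<noteq> 0"
proof -
  have "pcompose (bessel_poly n) [:0,-1:] \<noteq> 0"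
    using bessel_nz by (subst pcompose_eq_0_iff) auto
  thus ?thesis unfolding PB_def using bessel_nz by simp
qed

lemma PB_degree: "degree (PB n) = 2*n"
proof -
  have "pcompose (bessel_poly n) [:0,-1:] \<noteq> 0"
    using bessel_nz by (subst pcompose_eq_0_iff) auto
  thus ?thesis unfolding PB_def using bessel_nz
    by (subst degree_mult_eq) (auto simp: degree_pcompose degree_bessel)
qed

lemma PB_lead: "norm (coeff (PB n) (2*n)) = (lcr n)^2"
proof -
  have "lead_coeff (PB n) = lead_coeff (bessel_poly n) * (lead_coeff (bessel_poly n) * (-1)^n)"
    unfolding PB_def lead_coeff_mult by (subst lead_coeff_comp) (auto simp: degree_bessel)
  hence "coeff (PB n) (2*n) = of_real (lcr n) * (of_real (lcr n) * (-1)^n)"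
    unfolding PB_degree lc_bessel lcr_def[symmetric] .
  thus ?thesis using lcr_pos[of n] by (simp add: norm_mult norm_power power2_eq_square)
qed

lemma PB_high: "j > 2*n \<Longrightarrow> coeff (PB n) j = 0"
  by (rule coeff_eq_0) (simp add: PB_degree)

lemma PB_odd: "coeff (PB n) (2*k+1) = 0"
proof (induction k)
  case 0
  then show ?case using PB_coeff1 by simp
next
  case (Suc k)
  have "of_nat (4*((2*k+1)+2)) * coeff (PB n) ((2*k+1)+2)
     = - (of_nat ((2*k+1)+1) * (of_nat ((2*n+1)^2) - of_nat (((2*k+1)+1)^2))) * coeff (PB n) (2*k+1)"
    by (rule PB_rec)
  hence "of_nat (4*((2*k+1)+2)) * coeff (PB n) ((2*k+1)+2) = 0" using Suc.IH by simp
  moreover have "of_nat (4*((2*k+1)+2)) \<noteq> (0::complex)" by (simp only: of_nat_eq_0_iff) simp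
  ultimately have "coeff (PB n) ((2*k+1)+2) = 0" by simp
  thus ?case by (simp add: algebra_simps)
qed

lemma aux_ineq: "(k::nat) < n \<Longrightarrow> 2 \<le> n \<Longrightarrow> 2*(k+1)*(n+1) \<le> (2*k+1)*(n-k)*(n+k+1)"
proof -
  assume k: "k < n" and n: "2 \<le> n"
  show ?thesis
  proof (cases "n = k+1")
    case True
    then obtain j where "k = Suc j" using n by (cases k) auto
    then show ?thesis using True by (simp add: algebra_simps)
  next
    case False
    hence "n - k \<ge> 2" using k by simp
    have "2*(k+1)*(n+1) = (k+1)*2*(n+1)" by simp
    also have "\<dots> \<le> (2*k+1)*(n-k)*(n+k+1)"
      by (intro mult_mono) (use \<open>n - k \<ge> 2\<close> in auto)
    finally show ?thesis .
  qed
qed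

lemma PB_ratio:
  assumes "k < n" "2 \<le> n"
  shows "norm (coeff (PB n) (2*k)) \<le> norm (coeff (PB n) (2*k+2)) / real (n+1)"
proof -
  have r: "of_nat (4*(2*k+2)) * coeff (PB n) (2*k+2)
     = - (of_nat (2*k+1) * (of_nat ((2*n+1)^2) - of_nat ((2*k+1)^2))) * coeff (PB n) (2*k)"
    using PB_rec[of "2*k" n] by (simp add: algebra_simps)
  have d: "(2*n+1)^2 - (2*k+1)^2 = 4*(n-k)*(n+k+1)" using assms(1)
    by (simp add: power2_eq_square algebra_simps diff_mult_distrib diff_mult_distrib2)
  have le: "(2*k+1)^2 \<le> (2*n+1)^2" using assms(1) by (simp add: power_mono)
  have r2: "complex_of_nat (4*(2*k+2)) * coeff (PB n) (2*k+2)
     = - (of_nat (2*k+1) * of_nat (4*(n-k)*(n+k+1))) * coeff (PB n) (2*k)"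
    using r unfolding of_nat_diff[OF le, symmetric] d .
  define A where "A = 4*(2*k+2)"
  define B where "B = (2*k+1) * (4*(n-k)*(n+k+1))"
  have r3: "complex_of_nat A * coeff (PB n) (2*k+2) = - (of_nat B * coeff (PB n) (2*k))"
    unfolding A_def B_def of_nat_mult[of "2*k+1" "4*(n-k)*(n+k+1)"] using r2 by (simp only: mult_minus_left)
  have "norm (complex_of_nat A * coeff (PB n) (2*k+2)) = norm (complex_of_nat B * coeff (PB n) (2*k))"
    unfolding r3 by (rule norm_minus_cancel)
  hence "real (4*(2*k+2)) * norm (coeff (PB n) (2*k+2)) = real ((2*k+1) * (4*(n-k)*(n+k+1))) * norm (coeff (PB n) (2*k))"
    unfolding A_def[symmetric] B_def[symmetric] norm_mult norm_of_nat .
  moreover have "real (4*(2*k+2)) * real (n+1) \<le> real ((2*k+1) * (4*(n-k)*(n+k+1)))"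
  proof -
    have e1: "4*(2*k+2)*(n+1) = 4*(2*(k+1)*(n+1))" by (simp add: algebra_simps)
    have e2: "(2*k+1)*(4*(n-k)*(n+k+1)) = 4*((2*k+1)*(n-k)*(n+k+1))" by (simp only: mult.assoc mult.left_commute)
    have "4*(2*k+2)*(n+1) \<le> (2*k+1)*(4*(n-k)*(n+k+1))"
      unfolding e1 e2 using aux_ineq[OF assms] by simp
    thus ?thesis by (simp only: of_nat_mult[symmetric] of_nat_le_iff)
  qed
  moreover have Bp: "real ((2*k+1) * (4*(n-k)*(n+k+1))) > 0" using assms by (simp only: of_nat_0_less_iff) simp
  ultimately show ?thesis
  proof -
    assume eq: "real (4*(2*k+2)) * norm (coeff (PB n) (2*k+2)) = real ((2*k+1) * (4*(n-k)*(n+k+1))) * norm (coeff (PB n) (2*k))"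
       and ie: "real (4*(2*k+2)) * real (n+1) \<le> real ((2*k+1) * (4*(n-k)*(n+k+1)))"
       and Bp: "real ((2*k+1) * (4*(n-k)*(n+k+1))) > 0"
    define A' where "A' = real (4*(2*k+2))"
    define B' where "B' = real ((2*k+1) * (4*(n-k)*(n+k+1)))"
    have n1: "real (n+1) > 0" by simp
    have ie': "A' \<le> B' / real (n+1)" using ie n1 unfolding A'_def B'_def by (simp add: pos_le_divide_eq)
    have "norm (coeff (PB n) (2*k)) * B' = A' * norm (coeff (PB n) (2*k+2))"
      using eq unfolding A'_def B'_def by simp
    also have "\<dots> \<le> (B' / real (n+1)) * norm (coeff (PB n) (2*k+2))"
      by (rule mult_right_mono[OF ie' norm_ge_zero])
    also have "\<dots> = (norm (coeff (PB n) (2*k+2)) / real (n+1)) * B'" by simp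
    finally have fin: "norm (coeff (PB n) (2*k)) * B' \<le> (norm (coeff (PB n) (2*k+2)) / real (n+1)) * B'" .
    have "B' > 0" using Bp unfolding B'_def .
    from mult_right_le_imp_le[OF fin this] show ?thesis .
  qed
qed


lemma sum_even_odd: "(\<Sum>i<2*(n::nat). (f :: nat \<Rightarrow> complex) i) = (\<Sum>k<n. f (2*k) + f (2*k+1))"
  by (induction n) (simp_all add: algebra_simps)

lemma PB_odd': "coeff (PB n) (Suc (2*k)) = 0"
  using PB_odd[of n k] by simp

lemma PB_coeff_bound:
  assumes "j \<le> n" "2 \<le> n"
  shows "norm (coeff (PB n) (2*(n-j))) \<le> (lcr n)^2 / real (n+1)^j"
  using assms(1)
proof (induction j)
  case 0
  then show ?case using PB_lead[of n] by simp
next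
  case (Suc j)
  have k: "n - Suc j < n" using Suc.prems by simp
  have e: "2*(n - Suc j) + 2 = 2*(n-j)" using Suc.prems by simp
  have "norm (coeff (PB n) (2*(n - Suc j))) \<le> norm (coeff (PB n) (2*(n-j))) / real (n+1)"
    using PB_ratio[OF k assms(2)] unfolding e .
  also have "\<dots> \<le> ((lcr n)^2 / real (n+1)^j) / real (n+1)"
    using Suc.IH Suc.prems by (intro divide_right_mono) auto
  also have "\<dots> = (lcr n)^2 / real (n+1)^Suc j" by simp
  finally show ?case .
qed

lemma geo_bound:
  fixes r :: real
  assumes "0 \<le> r" "r < 1"
  shows "(\<Sum>k<n. r^(n-k)) \<le> r / (1-r)"
proof -
  have "(\<Sum>k<n. r^(n-k)) = (\<Sum>k<n. (\<lambda>i. r^(i+1)) (n - Suc k))"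
    by (intro sum.cong) (auto simp: Suc_diff_Suc)
  also have "\<dots> = (\<Sum>i<n. r^(i+1))" by (rule sum.nat_diff_reindex)
  also have "\<dots> = r * (\<Sum>i<n. r^i)" by (simp add: sum_distrib_left)
  also have "(\<Sum>i<n. r^i) = (1 - r^n)/(1-r)" using assms by (simp add: sum_gp_strict)
  also have "r * ((1 - r^n)/(1-r)) \<le> r * (1/(1-r))"
    using assms by (intro mult_left_mono divide_right_mono) auto
  finally show ?thesis by simp
qed

lemma PB_lower:
  fixes u :: complex
  assumes "2 \<le> n" "u \<noteq> 0" "r = 1 / (real (n+1) * norm u ^ 2)" "r < 1"
  shows "norm (poly (PB n) u - coeff (PB n) (2*n) * u^(2*n)) \<le> (lcr n)^2 * norm u^(2*n) * (r/(1-r))"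
proof -
  define c where "c = (\<lambda>i. coeff (PB n) i)"
  define L where "L = (lcr n)^2"
  have nu: "norm u > 0" using assms by simp
  have r0: "r \<ge> 0" using assms(3) by simp
  have "poly (PB n) u = (\<Sum>i\<le>2*n. c i * u^i)" unfolding c_def by (simp add: poly_altdef PB_degree)
  also have "\<dots> = (\<Sum>i<2*n. c i * u^i) + c (2*n) * u^(2*n)"
    by (simp add: lessThan_Suc_atMost[symmetric])
  finally have "poly (PB n) u - c (2*n) * u^(2*n) = (\<Sum>i<2*n. c i * u^i)" by simp
  also have "\<dots> = (\<Sum>k<n. c (2*k) * u^(2*k))"
    unfolding sum_even_odd by (simp add: c_def PB_odd')
  finally have eq: "poly (PB n) u - c (2*n) * u^(2*n) = (\<Sum>k<n. c (2*k) * u^(2*k))" .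
  have "norm (\<Sum>k<n. c (2*k) * u^(2*k)) \<le> (\<Sum>k<n. norm (c (2*k)) * norm u^(2*k))"
    by (rule order_trans[OF norm_sum]) (simp add: norm_mult norm_power)
  also have "\<dots> \<le> (\<Sum>k<n. L / real (n+1)^(n-k) * norm u^(2*k))"
  proof (intro sum_mono mult_right_mono)
    fix k assume "k \<in> {..<n}"
    hence "n - (n-k) = k" "n - k \<le> n" by auto
    thus "norm (c (2*k)) \<le> L / real (n+1)^(n-k)"
      using PB_coeff_bound[of "n-k" n] assms(1) unfolding c_def L_def by simp
  qed simp
  also have "\<dots> = (\<Sum>k<n. L * norm u^(2*n) * r^(n-k))"
  proof (intro sum.cong refl)
    fix k assume "k \<in> {..<n}"
    hence "2*n = 2*k + 2*(n-k)" by auto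
    hence p: "norm u^(2*n) = norm u^(2*k) * (norm u^2)^(n-k)" by (simp add: power_add power_mult)
    have "r^(n-k) = 1 / (real (n+1)^(n-k) * (norm u^2)^(n-k))"
      unfolding assms(3) by (simp add: power_mult_distrib power_divide)
    thus "L / real (n+1)^(n-k) * norm u^(2*k) = L * norm u^(2*n) * r^(n-k)"
      unfolding p using nu by (simp add: field_simps)
  qed
  also have "\<dots> = L * norm u^(2*n) * (\<Sum>k<n. r^(n-k))" by (simp add: sum_distrib_left)
  also have "\<dots> \<le> L * norm u^(2*n) * (r/(1-r))"
    using geo_bound[OF r0 assms(4)] unfolding L_def by (intro mult_left_mono) auto
  finally show ?thesis using eq unfolding c_def L_def by simp
qed

lemma PB_lower2:
  fixes u :: complex
  assumes "2 \<le> n" "u \<noteq> 0" "r = 1 / (real (n+1) * norm u ^ 2)" "r < 1"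
  shows "norm (poly (PB n) u) \<ge> (lcr n)^2 * norm u^(2*n) * (1 - r/(1-r))"
proof -
  have t: "norm (coeff (PB n) (2*n) * u^(2*n)) = (lcr n)^2 * norm u^(2*n)"
    by (simp add: norm_mult norm_power PB_lead)
  have "norm (coeff (PB n) (2*n) * u^(2*n)) - norm (poly (PB n) u) \<le>
        norm (poly (PB n) u - coeff (PB n) (2*n) * u^(2*n))"
    by (metis norm_minus_commute norm_triangle_ineq2)
  thus ?thesis using PB_lower[OF assms] t by (simp add: algebra_simps)
qed


lemma poly_PB: "poly (PB n) u = poly (bessel_poly n) u * poly (bessel_poly n) (-u)"
  unfolding PB_def by (simp add: poly_pcompose)

definition Qf :: "nat \<Rightarrow> complex \<Rightarrow> complex" where
  "Qf n z = (\<Sum>i\<le>2*n. coeff (PB n) i * (2*(1-z))^i * z^(2*n-i))"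

definition hB :: "nat \<Rightarrow> complex \<Rightarrow> complex" where
  "hB n z = -(z^(2*n+2)) / ((1-z)^2 * Qf n z)"

lemma Qf_eq:
  assumes "z \<noteq> 0"
  shows "Qf n z = z^(2*n) * poly (PB n) (2*(1-z)/z)"
proof -
  have "poly (PB n) (2*(1-z)/z) = (\<Sum>i\<le>2*n. coeff (PB n) i * (2*(1-z)/z)^i)"
    by (simp add: poly_altdef PB_degree)
  hence "z^(2*n) * poly (PB n) (2*(1-z)/z) = (\<Sum>i\<le>2*n. coeff (PB n) i * (z^(2*n) * (2*(1-z)/z)^i))"
    by (simp add: sum_distrib_left algebra_simps)
  also have "\<dots> = Qf n z" unfolding Qf_def
  proof (intro sum.cong refl)
    fix i assume "i \<in> {..2*n}"
    hence "z^(2*n) = z^i * z^(2*n-i)" by (simp add: power_add[symmetric])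
    thus "coeff (PB n) i * (z^(2*n) * (2*(1-z)/z)^i) = coeff (PB n) i * (2*(1-z))^i * z^(2*n-i)"
      using assms by (simp add: power_divide field_simps)
  qed
  finally show ?thesis by simp
qed

lemma Qf_0: "Qf n 0 = coeff (PB n) (2*n) * 2^(2*n)"
proof -
  have "Qf n 0 = (\<Sum>i\<le>2*n. if i = 2*n then coeff (PB n) (2*n) * 2^(2*n) else 0)"
    unfolding Qf_def by (intro sum.cong refl) auto
  thus ?thesis by simp
qed

lemma Qf_0_nz: "Qf n 0 \<noteq> 0"
  using PB_lead[of n] lcr_pos[of n] unfolding Qf_0 by auto

lemma PB_big:
  fixes u :: complex
  assumes "2 \<le> n" "u \<noteq> 0" "real (n+1) * norm u ^ 2 \<ge> 3"
  shows "norm (poly (PB n) u) \<ge> (lcr n)^2 * norm u^(2*n) / 2"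
proof -
  define r where "r = 1 / (real (n+1) * norm u ^ 2)"
  have rp: "r > 0" unfolding r_def using assms by simp
  have r3: "r \<le> 1/3" unfolding r_def using assms by (simp add: field_simps)
  hence "r < 1" by simp
  have "r/(1-r) \<le> 1/2" using r3 rp by (simp add: field_simps)
  hence "(lcr n)^2 * norm u^(2*n) * (1 - r/(1-r)) \<ge> (lcr n)^2 * norm u^(2*n) * (1/2)"
    by (intro mult_left_mono) auto
  from order_trans[OF this PB_lower2[OF assms(1,2) r_def \<open>r<1\<close>]] show ?thesis by simp
qed

lemma PB_big4:
  fixes u :: complex
  assumes "2 \<le> n" "u \<noteq> 0" "real (n+1) * norm u ^ 2 \<ge> 4"
  shows "norm (poly (PB n) u) \<ge> (lcr n)^2 * norm u^(2*n) * (2/3)"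
proof -
  define r where "r = 1 / (real (n+1) * norm u ^ 2)"
  have rp: "r > 0" unfolding r_def using assms by simp
  have r3: "r \<le> 1/4" unfolding r_def using assms by (simp add: field_simps)
  hence "r < 1" by simp
  have "r/(1-r) \<le> 1/3" using r3 rp by (simp add: field_simps)
  hence "(lcr n)^2 * norm u^(2*n) * (1 - r/(1-r)) \<ge> (lcr n)^2 * norm u^(2*n) * (2/3)"
    by (intro mult_left_mono) auto
  from order_trans[OF this PB_lower2[OF assms(1,2) r_def \<open>r<1\<close>]] show ?thesis .
qed


lemma norm_1_minus: "norm (1 - z :: complex) \<ge> 1 - norm z"
  by (metis norm_one norm_triangle_ineq2)

lemma u_norm_ge:
  fixes z :: complex
  assumes "z \<noteq> 0"
  shows "norm (2*(1-z)/z) \<ge> 2*(1 - norm z)/norm z"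
proof -
  have "norm (2*(1-z)/z) = 2 * norm (1-z) / norm z" unfolding norm_divide norm_mult by simp
  moreover have "2 * norm (1-z) / norm z \<ge> 2*(1 - norm z)/norm z"
    using norm_1_minus[of z] assms by (intro divide_right_mono) auto
  ultimately show ?thesis by simp
qed

lemma Qf_holo: "Qf n holomorphic_on S"
  unfolding Qf_def by (intro holomorphic_intros)

lemma region:
  fixes z :: complex and x :: real
  assumes x: "0 < x" "x < 1" and hn: "real (n+1) * (1-x)^2 \<ge> x^2" and n2: "2 \<le> n"
    and z: "norm z < 10*x/(9+x)"
  shows "1 - z \<noteq> 0 \<and> Qf n z \<noteq> 0"
proof (cases "z = 0")
  case True
  then show ?thesis using Qf_0_nz by simp
next
  case False
  define t where "t = norm z"
  have t0: "t > 0" using False unfolding t_def by simp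
  have R1: "10*x/(9+x) < 1" using x by (simp add: field_simps)
  have t1: "t < 1" using z R1 unfolding t_def by simp
  have "1 - z \<noteq> 0" using t1 unfolding t_def by auto
  define u where "u = 2*(1-z)/z"
  have u0: "u \<noteq> 0" unfolding u_def using False \<open>1 - z \<noteq> 0\<close> by simp
  have ug: "norm u \<ge> 2*(1-t)/t" unfolding u_def t_def by (rule u_norm_ge[OF False])
  have tx: "t * (9 + x) < 10 * x" using z x unfolding t_def by (simp add: field_simps)
  have a: "(1-t)/t > 9*(1-x)/(10*x)" using tx t0 x by (simp add: field_simps)
  have a2: "2*((1-t)/t) > 2*(9*(1-x)/(10*x))" using mult_strict_left_mono[OF a, of 2] by simp
  have e1: "2*(1-t)/t = 2*((1-t)/t)" by simp
  have e2: "2*(9*(1-x)/(10*x)) = 9*(1-x)/(5*x)" using x by (simp add: field_simps)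
  have b: "norm u > 9*(1-x)/(5*x)" using ug a2 e1 e2 by linarith
  have b0: "9*(1-x)/(5*x) > 0" using x by simp
  have c: "norm u ^ 2 > (9*(1-x)/(5*x))^2" using b b0 by (intro power_strict_mono) auto
  have "real (n+1) * norm u ^ 2 \<ge> real (n+1) * (9*(1-x)/(5*x))^2"
    using c by (intro mult_left_mono) auto
  also have "real (n+1) * (9*(1-x)/(5*x))^2 = (81/25) * (real (n+1) * (1-x)^2) / x^2"
    using x by (simp add: field_simps power2_eq_square)
  also have "\<dots> \<ge> (81/25) * x^2 / x^2" using hn x by (intro divide_right_mono mult_left_mono) auto
  finally have "real (n+1) * norm u ^ 2 \<ge> 3" using x by simp
  from PB_big[OF n2 u0 this] have "norm (poly (PB n) u) \<ge> (lcr n)^2 * norm u^(2*n) / 2" .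
  moreover have "(lcr n)^2 * norm u^(2*n) / 2 > 0" using lcr_pos[of n] u0 by simp
  ultimately have "poly (PB n) u \<noteq> 0" by auto
  hence "Qf n z \<noteq> 0" using Qf_eq[OF False] False unfolding u_def by simp
  thus ?thesis using \<open>1 - z \<noteq> 0\<close> by simp
qed

lemma hB_holo:
  fixes x :: real
  assumes x: "0 < x" "x < 1" and hn: "real (n+1) * (1-x)^2 \<ge> x^2" and n2: "2 \<le> n"
  shows "hB n holomorphic_on ball 0 (10*x/(9+x))"
proof -
  have "(\<lambda>z. -(z^(2*n+2)) / ((1-z)^2 * Qf n z)) holomorphic_on ball 0 (10*x/(9+x))"
    using region[OF x hn n2] by (intro holomorphic_intros Qf_holo) auto
  moreover have "(\<lambda>z. -(z^(2*n+2)) / ((1-z)^2 * Qf n z)) = hB n" by (rule ext) (simp add: hB_def)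
  ultimately show ?thesis by simp
qed

lemma hB_eq:
  assumes "z \<noteq> 0" "z \<noteq> 1"
  shows "hB n z = -4 / ((2*(1-z)/z)^2 * poly (PB n) (2*(1-z)/z))"
proof (cases "poly (PB n) (2*(1-z)/z) = 0")
  case True
  then show ?thesis unfolding hB_def Qf_eq[OF assms(1)] True by simp
next
  case False
  define P where "P = poly (PB n) (2*(1-z)/z)"
  have P0: "P \<noteq> 0" using False unfolding P_def .
  have z1: "1 - z \<noteq> 0" using assms by simp
  have "hB n z = -(z^(2*n) * z^2) / ((1-z)^2 * (z^(2*n) * P))"
    unfolding hB_def Qf_eq[OF assms(1)] P_def by (simp only: power_add)
  also have "\<dots> = -(z^2) / ((1-z)^2 * P)" using assms(1) by (simp add: field_simps)
  also have "\<dots> = -4 / ((2*(1-z)/z)^2 * P)"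
  proof -
    define D where "D = (1-z)^2 * P"
    have D0: "D \<noteq> 0" unfolding D_def using z1 P0 by simp
    have "(2*(1-z)/z)^2 * P = 4 * D / z^2" unfolding D_def by (simp add: power_divide power2_eq_square algebra_simps)
    hence "-4 / ((2*(1-z)/z)^2 * P) = -(z^2) / D" using D0 assms(1) by (simp add: field_simps)
    thus ?thesis unfolding D_def by simp
  qed
  finally show ?thesis unfolding P_def .
qed

lemma hB_bound:
  fixes z :: complex and x :: real
  assumes x: "0 < x" "x < 1" and hn: "real (n+1) * (1-x)^2 \<ge> x^2" and n2: "2 \<le> n"
    and z: "norm z = x"
  shows "norm (hB n z) \<le> 6 / ((lcr n)^2 * (2*(1-x)/x)^(2*n+2))"
proof -
  have z0: "z \<noteq> 0" using z x by auto
  have z1: "z \<noteq> 1" using z x by auto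
  define u where "u = 2*(1-z)/z"
  define b where "b = 2*(1-x)/x"
  have b0: "b > 0" unfolding b_def using x by simp
  have u0: "u \<noteq> 0" unfolding u_def using z0 z1 by simp
  have ug: "norm u \<ge> b" unfolding u_def b_def using u_norm_ge[OF z0] z by simp
  have "real (n+1) * norm u ^ 2 \<ge> real (n+1) * b^2"
    using ug b0 by (intro mult_left_mono power_mono) auto
  also have "real (n+1) * b^2 = 4 * (real (n+1) * (1-x)^2) / x^2"
    unfolding b_def by (simp add: field_simps power2_eq_square)
  also have "\<dots> \<ge> 4 * x^2 / x^2" using hn x by (intro divide_right_mono mult_left_mono) auto
  finally have "real (n+1) * norm u ^ 2 \<ge> 4" using x by simp
  from PB_big4[OF n2 u0 this] have P: "norm (poly (PB n) u) \<ge> (lcr n)^2 * norm u^(2*n) * (2/3)" .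
  define L where "L = (lcr n)^2"
  have L0: "L > 0" unfolding L_def using lcr_pos[of n] by simp
  have nu: "norm u > 0" using u0 by simp
  have "norm u ^ (2*n) > 0" using nu by simp
  have "norm (hB n z) = 4 / (norm u ^ 2 * norm (poly (PB n) u))"
    unfolding hB_eq[OF z0 z1] u_def[symmetric] by (simp add: norm_divide norm_mult norm_power)
  also have "\<dots> \<le> 4 / (norm u ^ 2 * (L * norm u^(2*n) * (2/3)))"
  proof (rule divide_left_mono)
    have pos: "norm u ^ 2 * (L * norm u^(2*n) * (2/3)) > 0" using L0 nu by simp
    show "norm u ^ 2 * (L * norm u^(2*n) * (2/3)) \<le> norm u ^ 2 * norm (poly (PB n) u)"
      using P unfolding L_def[symmetric] by (intro mult_left_mono) auto
    hence "norm u ^ 2 * norm (poly (PB n) u) > 0" using pos by linarith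
    thus "0 < norm u ^ 2 * norm (poly (PB n) u) * (norm u ^ 2 * (L * norm u^(2*n) * (2/3)))"
      using pos by simp
  qed simp
  also have "\<dots> = 6 / (L * norm u^(2*n+2))" using L0 nu by (simp add: field_simps power_add power2_eq_square)
  also have "\<dots> \<le> 6 / (L * b^(2*n+2))"
    using L0 b0 ug nu by (intro divide_left_mono mult_left_mono power_mono mult_pos_pos) auto
  finally show ?thesis unfolding L_def b_def .
qed


lemma key_identity:
  fixes z :: complex
  assumes z0: "z \<noteq> 0" and z1: "z \<noteq> 1" and P0: "poly (PB n) (2*(1-z)/z) \<noteq> 0"
  shows "(\<Sum>a\<in>bessel_zeros n. z/(1-(1-a/2)*z) - z/(1-(1+a/2)*z)) - z^2/(1-z)^2 = hB n z"
proof -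
  define Y where "Y = bessel_poly n"
  define u where "u = 2*(1-z)/z"
  have Yu: "poly Y u \<noteq> 0" and Ymu: "poly Y (-u) \<noteq> 0"
    using P0 unfolding poly_PB u_def[symmetric] Y_def by auto
  have u0: "u \<noteq> 0" unfolding u_def using z0 z1 by simp
  have zu: "z * u = 2*(1-z)" unfolding u_def using z0 by simp
  have t: "z/(1-(1-a/2)*z) - z/(1-(1+a/2)*z) = -2/((-u)-a) - 2/(u-a)" if a: "a \<in> bessel_zeros n" for a
  proof -
    have pa: "poly Y a = 0" using a unfolding bessel_zeros_def Y_def by simp
    have h1: "u + a \<noteq> 0" using pa Ymu by (metis add_eq_0_iff minus_minus)
    have h2: "u - a \<noteq> 0" using pa Yu by auto
    have e1: "1-(1-a/2)*z = z*(u+a)/2" using zu by (simp add: algebra_simps)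
    have e2: "1-(1+a/2)*z = z*(u-a)/2" using zu by (simp add: algebra_simps)
    have c: "z/(z*w/2) = 2/w" for w
    proof -
      have "z/(z*w/2) = (z*2)/(z*w)" by simp
      also have "\<dots> = 2/w" by (rule mult_divide_mult_cancel_left[OF z0])
      finally show ?thesis .
    qed
    have "z/(1-(1-a/2)*z) = 2/(u+a)" unfolding e1 by (rule c)
    moreover have "z/(1-(1+a/2)*z) = 2/(u-a)" unfolding e2 by (rule c)
    moreover have "-2/((-u)-a) = 2/(u+a)"
    proof -
      have e: "(-u)-a = -(u+a)" by simp
      show ?thesis unfolding e by (simp only: divide_minus_right minus_divide_left[symmetric] minus_minus)
    qed
    ultimately show ?thesis by simp
  qed
  have "(\<Sum>a\<in>bessel_zeros n. z/(1-(1-a/2)*z) - z/(1-(1+a/2)*z))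
      = (\<Sum>a\<in>bessel_zeros n. -2/((-u)-a) - 2/(u-a))" by (intro sum.cong refl t)
  also have "\<dots> = -2 * (\<Sum>a\<in>bessel_zeros n. 1/((-u)-a)) - 2 * (\<Sum>a\<in>bessel_zeros n. 1/(u-a))"
    by (simp add: sum_subtractf sum_distrib_left)
  also have "\<dots> = -2 * (poly (pderiv Y) (-u) / poly Y (-u)) - 2 * (poly (pderiv Y) u / poly Y u)"
    using bessel_logderiv[of n u] bessel_logderiv[of n "-u"] Yu Ymu unfolding Y_def by simp
  finally have S: "(\<Sum>a\<in>bessel_zeros n. z/(1-(1-a/2)*z) - z/(1-(1+a/2)*z))
      = -2 * (poly (pderiv Y) (-u) / poly Y (-u)) - 2 * (poly (pderiv Y) u / poly Y u)" .
  have Z: "z^2/(1-z)^2 = 4/u^2"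
  proof -
    have D0: "(1-z)^2 \<noteq> 0" using z1 by simp
    have "u^2 = 4*(1-z)^2/z^2" unfolding u_def by (simp add: power_divide power2_eq_square algebra_simps)
    thus ?thesis using D0 z0 u0 by (simp add: field_simps)
  qed
  have H: "hB n z = -4 / (u^2 * (poly Y u * poly Y (-u)))"
    unfolding hB_eq[OF z0 z1] u_def[symmetric] poly_PB Y_def ..
  have W: "u^2 * (poly (pderiv Y) (-u) * poly Y u + poly (pderiv Y) u * poly Y (-u))
        + 2 * poly Y u * poly Y (-u) = 2" unfolding Y_def by (rule bessel_wronski)
  show ?thesis unfolding S Z H using Yu Ymu u0 W
    apply (simp add: field_simps)
    by algebra
qed


definition cof :: "nat \<Rightarrow> nat \<Rightarrow> complex" where
  "cof n j = (if j = 0 then 0 else A_bessel (j-1) n - of_nat (j-1))"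

definition MB :: "nat \<Rightarrow> real" where
  "MB n = (\<Sum>a\<in>bessel_zeros n. norm (1-a/2) + norm (1+a/2))"

lemma MB_ge: "a \<in> bessel_zeros n \<Longrightarrow> norm (1-a/2) \<le> MB n \<and> norm (1+a/2) \<le> MB n"
proof -
  assume a: "a \<in> bessel_zeros n"
  have "norm (1-a/2) + norm (1+a/2) \<le> MB n"
    unfolding MB_def by (rule member_le_sum[OF a]) (auto simp: bessel_zeros_finite)
  thus ?thesis by (smt (verit) norm_ge_zero)
qed

lemma MB_nonneg: "MB n \<ge> 0" unfolding MB_def by (intro sum_nonneg) auto

lemma series_sums:
  fixes z :: complex
  assumes z0: "z \<noteq> 0" and z1: "norm z < 1" and zM: "norm z * (1 + MB n) < 1"
    and P0: "poly (PB n) (2*(1-z)/z) \<noteq> 0"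
  shows "(\<lambda>j. cof n j * z^j) sums hB n z"
proof -
  have zne1: "z \<noteq> 1" using z1 by auto
  have g1: "(\<lambda>k. c^k * z^(k+1)) sums (z/(1-c*z))" if c: "norm c \<le> MB n" for c
  proof -
    have "norm (c*z) \<le> MB n * norm z" using c by (simp add: norm_mult mult_right_mono)
    also have "\<dots> < 1" using zM MB_nonneg[of n] by (simp add: algebra_simps) (smt (verit) norm_ge_zero mult_nonneg_nonneg)
    finally have "(\<lambda>k. (c*z)^k) sums (1/(1-c*z))" by (rule geometric_sums)
    from sums_mult[OF this, of z] show ?thesis by (simp add: power_mult_distrib algebra_simps)
  qed
  have g2: "(\<lambda>k. of_nat k * z^(k+1)) sums (z^2/(1-z)^2)"
  proof -
    have "(\<lambda>k. of_nat (Suc k) * z^k) sums (1/(1-z)^2)" by (rule geometric_deriv_sums[OF z1])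
    from sums_mult[OF this, of "z^2"]
    have "(\<lambda>k. (\<lambda>k. of_nat k * z^(k+1)) (Suc k)) sums (z^2/(1-z)^2)"
      by (simp add: algebra_simps power2_eq_square)
    thus ?thesis by (subst (asm) sums_Suc_iff) simp
  qed
  have g3: "(\<lambda>k. (\<Sum>a\<in>bessel_zeros n. (1-a/2)^k * z^(k+1) - (1+a/2)^k * z^(k+1)) - of_nat k * z^(k+1))
      sums ((\<Sum>a\<in>bessel_zeros n. z/(1-(1-a/2)*z) - z/(1-(1+a/2)*z)) - z^2/(1-z)^2)"
    by (intro sums_diff sums_sum g2 g1) (auto dest: MB_ge)
  have g4: "(\<lambda>k. cof n (Suc k) * z^(Suc k)) sums hB n z"
  proof -
    have "(\<lambda>k. cof n (Suc k) * z^(Suc k)) =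
      (\<lambda>k. (\<Sum>a\<in>bessel_zeros n. (1-a/2)^k * z^(k+1) - (1+a/2)^k * z^(k+1)) - of_nat k * z^(k+1))"
      by (rule ext) (simp add: cof_def A_bessel_def sum_distrib_right left_diff_distrib)
    thus ?thesis using g3 key_identity[OF z0 zne1 P0] by simp
  qed
  thus ?thesis by (subst (asm) sums_Suc_iff) (simp add: cof_def)
qed


theorem mainTheorem8:
  fixes x :: real and n m :: nat
  assumes "0 < x" "x < 1" and "real n \<ge> n0 x" and "m \<ge> 2*n+1"
  shows "norm (of_nat m - A_bessel m n) <
    2 * x powi (int (2*n+1) - int m) / (1-x)^(2*n+2) * ((fact n)^2 / (fact (2*n))^2)"
proof -
  note x = assms(1,2)
  have n13: "real n \<ge> 13" using assms(3) unfolding n0_def by simp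
  hence n2: "2 \<le> n" by simp
  have "real n + 1 \<ge> x^2/(1-x)^2" using assms(3) unfolding n0_def by simp
  hence hn: "real (n+1) * (1-x)^2 \<ge> x^2" using x by (simp add: field_simps)
  define R where "R = 10*x/(9+x)"
  have xR: "x < R" unfolding R_def using x by (simp add: field_simps)
  define \<epsilon> where "\<epsilon> = min x (1/(1 + MB n))"
  have e0: "\<epsilon> > 0" unfolding \<epsilon>_def using x MB_nonneg[of n] by simp
  have hol: "hB n holomorphic_on ball 0 R" unfolding R_def by (rule hB_holo[OF x hn n2])
  have S: "(\<lambda>j. cof n j * z^j) sums hB n z" if z: "norm z < \<epsilon>" for z
  proof (cases "z = 0")
    case True
    have "(\<lambda>j. cof n j * z^j) = (\<lambda>_. 0)" using True by (auto simp: cof_def fun_eq_iff)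
    moreover have "hB n z = 0" using True by (simp add: hB_def)
    ultimately show ?thesis by simp
  next
    case False
    have zx: "norm z < x" using z unfolding \<epsilon>_def by simp
    have z1: "norm z < 1" using zx x by simp
    have "norm z < 1/(1 + MB n)" using z unfolding \<epsilon>_def by simp
    hence zM: "norm z * (1 + MB n) < 1" using MB_nonneg[of n] by (simp add: field_simps)
    have "norm z < R" using zx xR by simp
    hence "Qf n z \<noteq> 0" using region[OF x hn n2] unfolding R_def by blast
    hence P0: "poly (PB n) (2*(1-z)/z) \<noteq> 0" using Qf_eq[OF False] by simp
    show ?thesis by (rule series_sums[OF False z1 zM P0])
  qed
  define F where "F = Abs_fps (cof n)"
  have exp: "hB n has_fps_expansion F"
  proof -
    have "summable (\<lambda>j. cof n j * (complex_of_real (\<epsilon>/2))^j)"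
      using S[of "complex_of_real (\<epsilon>/2)"] e0 by (auto simp: sums_iff)
    hence "conv_radius (cof n) \<ge> norm (complex_of_real (\<epsilon>/2))" by (rule conv_radius_geI)
    hence r: "fps_conv_radius F > 0" unfolding F_def fps_conv_radius_def using e0
      by (auto intro: less_le_trans[rotated])
    have "eventually (\<lambda>z. eval_fps F z = hB n z) (nhds 0)"
      unfolding eventually_nhds_metric
    proof (intro exI conjI allI impI)
      show "\<epsilon> > 0" by (rule e0)
      fix z :: complex assume "dist z 0 < \<epsilon>"
      hence "norm z < \<epsilon>" by simp
      from S[OF this] show "eval_fps F z = hB n z" unfolding eval_fps_def F_def
        by (simp add: sums_iff)
    qed
    with r show ?thesis unfolding has_fps_expansion_def by simp
  qed
  have coefeq: "cof n (Suc m) = (deriv ^^ (Suc m)) (hB n) 0 / fact (Suc m)"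
    using fps_nth_fps_expansion[OF exp, of "Suc m"] unfolding F_def by simp
  define B where "B = 6 / ((lcr n)^2 * (2*(1-x)/x)^(2*n+2))"
  have C: "norm ((deriv ^^ (Suc m)) (hB n) 0) \<le> fact (Suc m) * B / x^(Suc m)"
  proof (rule Cauchy_inequality)
    show "hB n holomorphic_on ball 0 x" using xR by (intro holomorphic_on_subset[OF hol]) auto
    show "continuous_on (cball 0 x) (hB n)"
      using xR by (intro continuous_on_subset[OF holomorphic_on_imp_continuous_on[OF hol]]) auto
    show "0 < x" by (rule x(1))
    fix z :: complex assume "norm (0 - z) = x"
    hence "norm z = x" by simp
    thus "norm (hB n z) \<le> B" unfolding B_def by (rule hB_bound[OF x hn n2])
  qed
  have bnd: "norm (of_nat m - A_bessel m n) \<le> B / x^(Suc m)"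
  proof -
    have "norm (of_nat m - A_bessel m n) = norm (cof n (Suc m))"
      by (simp add: cof_def norm_minus_commute)
    also have "\<dots> = norm ((deriv ^^ (Suc m)) (hB n) 0) / fact (Suc m)"
      unfolding coefeq norm_divide norm_fact ..
    also have "\<dots> \<le> (fact (Suc m) * B / x^(Suc m)) / fact (Suc m)"
      using C by (intro divide_right_mono) auto
    also have "\<dots> = B / x^(Suc m)" by simp
    finally show ?thesis .
  qed
  define d where "d = m - (2*n+1)"
  have md: "m = 2*n+1+d" unfolding d_def using assms(4) by simp
  have pw: "x powi (int (2*n+1) - int m) = 1 / x^d"
  proof -
    have "int (2*n+1) - int m = - int d" unfolding md by simp
    thus ?thesis by (simp add: power_int_minus_divide)
  qed
  define T where "T = 2 * x powi (int (2*n+1) - int m) / (1-x)^(2*n+2) * ((fact n)^2 / (fact (2*n))^2)"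
  have Tpos: "T > 0" unfolding T_def pw using x by simp
  have BT: "B / x^(Suc m) = (3/4) * T"
  proof -
    have xs: "x^(Suc m) = x^(2*n+2) * x^d" unfolding md by (simp add: power_add)
    have q: "(2*(1-x)/x)^(2*n+2) = 4 * (2^n)^2 * (1-x)^(2*n+2) / x^(2*n+2)"
    proof -
      have t: "(2::real)^(2*n+2) = 4 * (2^n)^2"
        by (simp add: power_add power_mult[symmetric] mult.commute)
      show ?thesis unfolding power_divide power_mult_distrib t ..
    qed
    have l: "(lcr n)^2 = (fact (2*n))^2 / ((fact n)^2 * (2^n)^2)"
      unfolding lcr_def by (simp add: power_divide power_mult_distrib)
    have p1: "(1-x)^(2*n+2) > 0" using x by simp
    have p2: "x^d > 0" "x^(2*n+2) > 0" using x by auto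
    have p3: "(fact (2*n) :: real) > 0" "(fact n :: real) > 0" by auto
    have gen: "\<And>W X2 Xd Fn F2 P2::real. W > 0 \<Longrightarrow> X2 > 0 \<Longrightarrow> Xd > 0 \<Longrightarrow> Fn > 0 \<Longrightarrow> F2 > 0 \<Longrightarrow> P2 > 0 \<Longrightarrow>
       6 / ((F2^2 / (Fn^2 * P2)) * (4 * P2 * W / X2)) / (X2 * Xd) = 3/4 * (2 * (1/Xd) / W * (Fn^2 / F2^2))"
      by (simp add: field_simps power2_eq_square)
    show ?thesis unfolding B_def T_def pw xs q l
      by (rule gen) (use p1 p2 p3 in auto)
  qed
  have "norm (of_nat m - A_bessel m n) \<le> (3/4) * T" using bnd unfolding BT .
  also have "\<dots> < T" using Tpos by simp
  finally show ?thesis unfolding T_def .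
qed

end
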